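(* Let $\psi$ be a CNF formula with only positive literals, with clauses $C_1,\dots,C_m$ each consisting of three distinct variables, and variables $x_1,\dots,x_p$, in which every variable appears in at least $3$ clauses. Let $G$ be the graph constructed as follows: (1) for each variable $x_i$ create a cycle $D_i$ whose number of vertices equals the number of clauses containing $x_i$; (2) add a vertex $a$ adjacent to every vertex of all cycles $D_1,\dots,D_p$; (3) for each clause $\{x_i,x_j,x_k\}$ add a vertex $u_{ijk}$ adjacent to one vertex of each of $D_i,D_j,D_k$, choosing in each cycle a vertex not yet adjacent to any clause-vertex; (4) subdivide once every edge of the cycles $D_1,\dots,D_p$ and every edge incident to $a$. If $\psi$ has an assignment in which every clause contains exactly one true variable, then $G$ has a $1/2$-shallow topological minor of density $\frac{5m}{2m+1}$.
   Context: A graph $H$ is a $1/2$-shallow topological minor of $G$ if some graph obtained from $H$ by subdividing each edge at most once is isomorphic to a subgraph of $G$. The density of $H$ is $\|H\|/|H|$ (number of edges divided by number of vertices). *)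

theory Defs
  imports Complex_Main
begin

definition simple_graph :: "'a set \<Rightarrow> 'a set set \<Rightarrow> bool" where
  "simple_graph V E \<longleftrightarrow> finite V \<and> (\<forall>e\<in>E. e \<subseteq> V \<and> card e = 2)"

(* H = (VH,EH) is a 1/2-shallow topological minor of G = (VG,EG): a graph obtained
   from H by subdividing each edge at most once is isomorphic to a subgraph of G. *)
definition half_shallow_top_minor ::
  "'b set \<Rightarrow> 'b set set \<Rightarrow> 'a set \<Rightarrow> 'a set set \<Rightarrow> bool" where
  "half_shallow_top_minor VH EH VG EG \<longleftrightarrow> simple_graph VH EH \<and>
     (\<exists>(\<phi>::'b \<Rightarrow> 'a) (s::'b set \<Rightarrow> 'a option).
        inj_on \<phi> VH \<and> \<phi> ` VH \<subseteq> VG \<and>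
        (\<forall>e\<in>EH. \<forall>u v. e = {u, v} \<longrightarrow>
           (case s e of
              None \<Rightarrow> {\<phi> u, \<phi> v} \<in> EG
            | Some w \<Rightarrow> w \<in> VG - \<phi> ` VH \<and> {\<phi> u, w} \<in> EG \<and> {w, \<phi> v} \<in> EG)) \<and>
        inj_on s {e \<in> EH. s e \<noteq> None})"

definition density :: "'b set \<Rightarrow> 'b set set \<Rightarrow> real" where
  "density V E = real (card E) / real (card V)"

(* Vertices of the constructed graph G:
   A         the vertex a
   Cyc i k   k-th vertex of the cycle D_i (k < d_i)
   Cl j      the clause vertex u for clause C_j
   SubC i k  subdivision vertex of cycle edge Cyc i k -- Cyc i ((k+1) mod d_i)
   SubA i k  subdivision vertex of edge A -- Cyc i k *)
datatype vtx = A | Cyc nat nat | Cl nat | SubC nat nat | SubA nat nat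

definition occ :: "nat \<Rightarrow> (nat \<Rightarrow> nat set) \<Rightarrow> nat \<Rightarrow> nat" where
  "occ m C i = card {j. j < m \<and> i \<in> C j}"

definition GV :: "nat \<Rightarrow> nat \<Rightarrow> (nat \<Rightarrow> nat set) \<Rightarrow> vtx set" where
  "GV p m C = {A} \<union> {Cyc i k | i k. i < p \<and> k < occ m C i} \<union> {Cl j | j. j < m}
     \<union> {SubC i k | i k. i < p \<and> k < occ m C i} \<union> {SubA i k | i k. i < p \<and> k < occ m C i}"

definition GE :: "nat \<Rightarrow> nat \<Rightarrow> (nat \<Rightarrow> nat set) \<Rightarrow> (nat \<Rightarrow> nat \<Rightarrow> nat) \<Rightarrow> vtx set set" where
  "GE p m C \<sigma> =
     {{Cyc i k, SubC i k} | i k. i < p \<and> k < occ m C i}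
   \<union> {{SubC i k, Cyc i ((k + 1) mod occ m C i)} | i k. i < p \<and> k < occ m C i}
   \<union> {{A, SubA i k} | i k. i < p \<and> k < occ m C i}
   \<union> {{SubA i k, Cyc i k} | i k. i < p \<and> k < occ m C i}
   \<union> {{Cl j, Cyc i (\<sigma> i j)} | i j. j < m \<and> i \<in> C j}"

end

theory Submission
  imports Defs
begin

lemma mod_cyc_aux:
  fixes d k k' :: nat
  assumes d: "3 \<le> d" and kd: "k < d" and k'd: "k' < d" and e4: "(k'+1) mod d = k" and e5: "(k+1) mod d = k'"
  shows False
proof (cases "k + 1 < d")
  case True
  then have kk: "k' = k + 1" using e5 by simp
  show False
  proof (cases "k + 2 < d")
    case True
    then show False using e4 kk by simp
  next
    case False
    then have "k + 2 = d" using kk k'd by simp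
    then have "(k'+1) mod d = 0" using kk by simp
    then show False using e4 \<open>k + 2 = d\<close> d by simp
  qed
next
  case False
  then have "k + 1 = d" using kd by simp
  then have "k' = 0" using e5 by simp
  then have "k = 1" using e4 d by simp
  then show False using \<open>k + 1 = d\<close> d by simp
qed

lemma mod_neq: fixes d k :: nat assumes "3 \<le> d" "k < d" shows "(k+1) mod d \<noteq> k"
  using assms by (cases "k+1 < d") (auto simp: mod_if)

lemma ge1: "i<p \<Longrightarrow> k<occ m C i \<Longrightarrow> {Cyc i k, SubC i k} \<in> GE p m C \<sigma>" unfolding GE_def by blast
lemma ge2: "i<p \<Longrightarrow> k<occ m C i \<Longrightarrow> {SubC i k, Cyc i ((k + 1) mod occ m C i)} \<in> GE p m C \<sigma>" unfolding GE_def by blast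
lemma ge3: "i<p \<Longrightarrow> k<occ m C i \<Longrightarrow> {A, SubA i k} \<in> GE p m C \<sigma>" unfolding GE_def by blast
lemma ge4: "i<p \<Longrightarrow> k<occ m C i \<Longrightarrow> {SubA i k, Cyc i k} \<in> GE p m C \<sigma>" unfolding GE_def by blast
lemma ge5: "j<m \<Longrightarrow> i \<in> C j \<Longrightarrow> {Cl j, Cyc i (\<sigma> i j)} \<in> GE p m C \<sigma>" unfolding GE_def by blast

theorem lemma2:
  fixes p m :: nat and C :: "nat \<Rightarrow> nat set" and \<sigma> :: "nat \<Rightarrow> nat \<Rightarrow> nat"
  assumes clauses: "\<forall>j<m. C j \<subseteq> {..<p} \<and> card (C j) = 3"
    and occ3: "\<forall>i<p. occ m C i \<ge> 3"
    and attach: "\<forall>i<p. bij_betw (\<sigma> i) {j. j < m \<and> i \<in> C j} {..<occ m C i}"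
    and exact1: "\<exists>T \<subseteq> {..<p}. \<forall>j<m. card (C j \<inter> T) = 1"
  shows "\<exists>(VH :: vtx set) EH. VH \<noteq> {} \<and> half_shallow_top_minor VH EH (GV p m C) (GE p m C \<sigma>)
           \<and> density VH EH = 5 * real m / (2 * real m + 1)"
proof -
  obtain T where T: "T \<subseteq> {..<p}" "\<forall>j<m. card (C j \<inter> T) = 1" using exact1 by blast
  define d where "d i = occ m C i" for i
  define F where "F = {..<p} - T"
  define S where "S = (SIGMA i:F. {..<d i})"
  define e3 where "e3 j = (\<lambda>i. Cyc i (\<sigma> i j)) ` (C j - T)" for j
  define eo where "eo w = (case w of SubA i k \<Rightarrow> {A, Cyc i k}
      | SubC i k \<Rightarrow> {Cyc i k, Cyc i ((k+1) mod d i)} | Cl j \<Rightarrow> e3 j | _ \<Rightarrow> {})" for w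
  define W where "W = (\<lambda>(i,k). SubA i k) ` S \<union> (\<lambda>(i,k). SubC i k) ` S \<union> Cl ` {..<m}"
  define VH where "VH = insert A ((\<lambda>(i,k). Cyc i k) ` S)"
  define EH where "EH = eo ` W"
  define s where "s e = Some (SOME w. w \<in> W \<and> eo w = e)" for e
  have finF: "finite F" unfolding F_def by simp
  have finS: "finite S" unfolding S_def using finF by simp
  have cardC: "finite (C j) \<and> card (C j - T) = 2" if "j < m" for j
  proof -
    have "card (C j) = 3" using clauses that by blast
    then have f: "finite (C j)" by (metis card.infinite zero_neq_numeral)
    have "card (C j - T) = card (C j) - card (C j \<inter> T)" using f by (simp add: card_Diff_subset_Int)
    then show ?thesis using f T(2) that \<open>card (C j) = 3\<close> by simp
  qed
  have sig: "\<sigma> i j < d i" if "i < p" "j < m" "i \<in> C j" for i j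
    using attach that unfolding d_def bij_betw_def by blast
  have siginj: "inj_on (\<sigma> i) {j. j < m \<and> i \<in> C j}" if "i < p" for i
    using attach that unfolding bij_betw_def by blast
  have d3: "3 \<le> d i" if "i \<in> F" for i using occ3 that unfolding F_def d_def by auto
  have e3two: "\<exists>i1 i2. i1 \<noteq> i2 \<and> C j - T = {i1, i2} \<and> e3 j = {Cyc i1 (\<sigma> i1 j), Cyc i2 (\<sigma> i2 j)}"
    if jm: "j < m" for j
  proof -
    obtain i1 i2 where "i1 \<noteq> i2" "C j - T = {i1, i2}" using conjunct2[OF cardC[OF jm]] card_2_iff by metis
    then show ?thesis unfolding e3_def by auto
  qed
  have CjF: "C j - T \<subseteq> F" if "j < m" for j using clauses that unfolding F_def by auto
  have cardS: "card S = 2 * m"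
  proof -
    have "card S = (\<Sum>i\<in>F. d i)" unfolding S_def using finF by simp
    also have "\<dots> = (\<Sum>i\<in>F. card {j. j < m \<and> i \<in> C j})" unfolding d_def occ_def by simp
    also have "\<dots> = card (SIGMA i:F. {j. j < m \<and> i \<in> C j})" using finF by simp
    also have "\<dots> = card (SIGMA j:{..<m}. C j - T)"
    proof -
      have "(SIGMA j:{..<m}. C j - T) = (\<lambda>(i,j). (j,i)) ` (SIGMA i:F. {j. j < m \<and> i \<in> C j})"
        using CjF unfolding F_def by force
      moreover have "inj_on (\<lambda>(i,j). (j,i)) (SIGMA i:F. {j. j < m \<and> i \<in> C j})"
        by (auto simp: inj_on_def)
      ultimately show ?thesis by (simp add: card_image)
    qed
    also have "\<dots> = (\<Sum>j<m. card (C j - T))" using cardC by (simp add: card_SigmaI)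
    also have "\<dots> = (\<Sum>j<m. 2)" using cardC by simp
    finally show ?thesis by simp
  qed
  have cardVH: "card VH = 2 * m + 1"
  proof -
    have "inj_on (\<lambda>(i,k). Cyc i k) S" by (auto simp: inj_on_def)
    then have "card ((\<lambda>(i,k). Cyc i k) ` S) = 2 * m" using cardS by (simp add: card_image)
    moreover have "A \<notin> (\<lambda>(i,k). Cyc i k) ` S" by auto
    ultimately show ?thesis unfolding VH_def using finS by simp
  qed
  have cardW: "card W = 5 * m"
  proof -
    have i1: "inj_on (\<lambda>(i,k). SubA i k) S" by (auto simp: inj_on_def)
    have i2: "inj_on (\<lambda>(i,k). SubC i k) S" by (auto simp: inj_on_def)
    have "card ((\<lambda>(i,k). SubA i k) ` S \<union> (\<lambda>(i,k). SubC i k) ` S) = 4 * m"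
      by (subst card_Un_disjoint) (use finS i1 i2 cardS in \<open>auto simp: card_image\<close>)
    then show ?thesis unfolding W_def
      by (subst card_Un_disjoint) (use finS in \<open>auto simp: card_image inj_on_def\<close>)
  qed
  have inS: "(i,k) \<in> S \<Longrightarrow> i < p \<and> k < d i \<and> i \<in> F \<and> 3 \<le> d i" for i k
    using d3 unfolding S_def F_def by auto
  have imS: "(i,k) \<in> S \<Longrightarrow> f i k \<in> (\<lambda>(i,k). f i k) ` S" for i k and f :: "nat \<Rightarrow> nat \<Rightarrow> vtx"
    by (rule image_eqI[where x="(i,k)"]) auto
  have modlt: "(k+1) mod d i < d i" if "(i,k) \<in> S" for i k
    using inS[OF that] by simp
  have GVS: "f i k \<in> GV p m C" if "(i,k) \<in> S" "f = Cyc \<or> f = SubC \<or> f = SubA" for i k f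
    using inS[OF that(1)] that(2) unfolding GV_def d_def by blast
  have eoW: "eo w \<subseteq> VH \<and> card (eo w) = 2 \<and> w \<in> GV p m C - VH \<and> (\<forall>x\<in>eo w. {w,x} \<in> GE p m C \<sigma>)"
    if wW: "w \<in> W" for w
  proof -
    consider (a) i k where "(i,k) \<in> S" "w = SubA i k" | (c) i k where "(i,k) \<in> S" "w = SubC i k"
      | (l) j where "j < m" "w = Cl j"
      using wW unfolding W_def by auto
    then show ?thesis
    proof cases
      case a
      note h = inS[OF a(1)]
      have "Cyc i k \<in> VH" unfolding VH_def using imS[OF a(1), of Cyc] by simp
      moreover have "SubA i k \<in> GV p m C" using GVS[OF a(1)] by blast
      moreover have "{SubA i k, A} \<in> GE p m C \<sigma>" using ge3[of i p k m C \<sigma>] h unfolding d_def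
        by (simp add: insert_commute)
      moreover have "{SubA i k, Cyc i k} \<in> GE p m C \<sigma>" using ge4[of i p k m C \<sigma>] h unfolding d_def
        by simp
      ultimately show ?thesis using a unfolding eo_def VH_def by auto
    next
      case c
      note h = inS[OF c(1)]
      have "Cyc i k \<in> VH" unfolding VH_def using imS[OF c(1), of Cyc] by simp
      moreover have "(i, (k+1) mod d i) \<in> S" using c(1) modlt[OF c(1)] unfolding S_def by auto
      then have "Cyc i ((k+1) mod d i) \<in> VH" unfolding VH_def using imS[of i "(k+1) mod d i" Cyc] by simp
      moreover have "SubC i k \<in> GV p m C" using GVS[OF c(1)] by blast
      moreover have "{SubC i k, Cyc i k} \<in> GE p m C \<sigma>" using ge1[of i p k m C \<sigma>] h unfolding d_def
        by (simp add: insert_commute)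
      moreover have "{SubC i k, Cyc i ((k+1) mod d i)} \<in> GE p m C \<sigma>" using ge2[of i p k m C \<sigma>] h unfolding d_def
        by simp
      moreover have "Cyc i ((k+1) mod d i) \<noteq> Cyc i k" using mod_neq[of "d i" k] h by simp
      ultimately show ?thesis using c unfolding eo_def VH_def by auto
    next
      case l
      obtain i1 i2 where ii: "i1 \<noteq> i2" "C j - T = {i1, i2}" "e3 j = {Cyc i1 (\<sigma> i1 j), Cyc i2 (\<sigma> i2 j)}"
        using e3two[OF l(1)] by blast
      have mem: "Cyc i (\<sigma> i j) \<in> VH \<and> {Cl j, Cyc i (\<sigma> i j)} \<in> GE p m C \<sigma>" if "i \<in> C j - T" for i
      proof -
        have "i \<in> F" using CjF[OF l(1)] that by blast
        then have "i < p" unfolding F_def by simp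
        then have "(i, \<sigma> i j) \<in> S" using sig[of i j] l(1) that \<open>i \<in> F\<close> unfolding S_def by auto
        then show ?thesis using ge5[of j m i C \<sigma> p] l(1) that imS[of i "\<sigma> i j" Cyc]
          unfolding VH_def by auto
      qed
      have "Cl j \<in> GV p m C" unfolding GV_def using l(1) by blast
      moreover have "Cl j \<notin> VH" unfolding VH_def by auto
      ultimately show ?thesis using l ii mem[of i1] mem[of i2] unfolding eo_def by auto
    qed
  qed
  have idx: "w \<in> W \<Longrightarrow> (A \<in> eo w \<longleftrightarrow> (\<exists>i k. w = SubA i k))" for w
    unfolding W_def eo_def e3_def by auto
  have eoinj: "inj_on eo W"
  proof (rule inj_onI)
    fix w w' assume w: "w \<in> W" and w': "w' \<in> W" and eq: "eo w = eo w'"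
    consider (a) i k where "(i,k) \<in> S" "w = SubA i k" | (c) i k where "(i,k) \<in> S" "w = SubC i k"
      | (l) j where "j < m" "w = Cl j"
      using w unfolding W_def by auto
    note cw = this
    consider (a) i k where "(i,k) \<in> S" "w' = SubA i k" | (c) i k where "(i,k) \<in> S" "w' = SubC i k"
      | (l) j where "j < m" "w' = Cl j"
      using w' unfolding W_def by auto
    note cw' = this
    have sameA: "(\<exists>i k. w = SubA i k) \<longleftrightarrow> (\<exists>i k. w' = SubA i k)" using idx[OF w] idx[OF w'] eq by simp
    have cl2: "\<not> (\<exists>i. \<forall>x\<in>eo (Cl j). \<exists>k. x = Cyc i k)" if jm: "j < m" for j
    proof
      assume "\<exists>i. \<forall>x\<in>eo (Cl j). \<exists>k. x = Cyc i k"
      then obtain i where i: "\<forall>x\<in>eo (Cl j). \<exists>k. x = Cyc i k" by blast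
      obtain i1 i2 where ii: "i1 \<noteq> i2" "e3 j = {Cyc i1 (\<sigma> i1 j), Cyc i2 (\<sigma> i2 j)}"
        using e3two[OF jm] by blast
      then show False using i unfolding eo_def by auto
    qed
    have sc: "\<exists>i'. \<forall>x\<in>eo (SubC i k). \<exists>k'. x = Cyc i' k'" for i k unfolding eo_def by auto
    show "w = w'"
    proof (cases rule: cw)
      case (a i k)
      then obtain i' k' where "w' = SubA i' k'" using sameA cw' by auto
      then show ?thesis using eq a unfolding eo_def by (auto simp: doubleton_eq_iff)
    next
      case (c i k)
      show ?thesis
      proof (cases rule: cw')
        case (a i' k') then show ?thesis using sameA c by auto
      next
        case c': (c i' k')
        have h: "{Cyc i k, Cyc i ((k+1) mod d i)} = {Cyc i' k', Cyc i' ((k'+1) mod d i')}"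
          using eq c c' unfolding eo_def by simp
        then have "i = i'" by (auto simp: doubleton_eq_iff)
        moreover have "k = k'"
        proof (rule ccontr)
          assume "k \<noteq> k'"
          then have "(k'+1) mod d i = k" "(k+1) mod d i = k'" using h \<open>i = i'\<close> by (auto simp: doubleton_eq_iff)
          then show False using mod_cyc_aux[of "d i" k k'] inS[OF c(1)] inS[OF c'(1)] \<open>i = i'\<close> by blast
        qed
        ultimately show ?thesis using c c' by simp
      next
        case (l j') then show ?thesis using eq c cl2[of j'] sc[of i k] by metis
      qed
    next
      case (l j)
      show ?thesis
      proof (cases rule: cw')
        case (a i' k') then show ?thesis using sameA l by auto
      next
        case (c i' k') then show ?thesis using eq l cl2[of j] sc[of i' k'] by metis
      next
        case l': (l j')
        obtain i1 i2 where ii: "i1 \<noteq> i2" "C j - T = {i1, i2}" "e3 j = {Cyc i1 (\<sigma> i1 j), Cyc i2 (\<sigma> i2 j)}"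
          using e3two[OF l(1)] by blast
        have "eo (Cl j) = eo (Cl j')" using eq l(2) l'(2) by simp
        then have ee: "e3 j = e3 j'" unfolding eo_def by simp
        have "Cyc i1 (\<sigma> i1 j) \<in> e3 j" using ii(3) by simp
        then have "Cyc i1 (\<sigma> i1 j) \<in> e3 j'" using ee by simp
        then have "i1 \<in> C j'" "\<sigma> i1 j = \<sigma> i1 j'" unfolding e3_def by auto
        moreover have "i1 \<in> C j" "i1 < p" using ii CjF[OF l(1)] unfolding F_def by auto
        ultimately have "j = j'" using siginj[of i1] l(1) l'(1) unfolding inj_on_def by blast
        then show ?thesis using l l' by simp
      qed
    qed
  qed
  have cardEH: "card EH = 5 * m" unfolding EH_def using eoinj cardW by (simp add: card_image)
  have sspec: "s e = Some (SOME w. w \<in> W \<and> eo w = e) \<and> (SOME w. w \<in> W \<and> eo w = e) \<in> W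
      \<and> eo (SOME w. w \<in> W \<and> eo w = e) = e" if "e \<in> EH" for e
  proof -
    have "\<exists>w. w \<in> W \<and> eo w = e" using that unfolding EH_def by blast
    then show ?thesis unfolding s_def by (metis (mono_tags, lifting) someI_ex)
  qed
  have finVH: "finite VH" unfolding VH_def using finS by simp
  have sg: "simple_graph VH EH" unfolding simple_graph_def EH_def using finVH eoW by auto
  have VHGV: "VH \<subseteq> GV p m C"
  proof -
    have "A \<in> GV p m C" unfolding GV_def by blast
    moreover have "(\<lambda>(i,k). Cyc i k) ` S \<subseteq> GV p m C" using GVS by auto
    ultimately show ?thesis unfolding VH_def by auto
  qed
  have hs: "half_shallow_top_minor VH EH (GV p m C) (GE p m C \<sigma>)"
    unfolding half_shallow_top_minor_def
  proof (intro conjI sg exI[of _ id] exI[of _ s])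
    show "inj_on id VH" by simp
    show "id ` VH \<subseteq> GV p m C" using VHGV by simp
    show "\<forall>e\<in>EH. \<forall>u v. e = {u, v} \<longrightarrow>
      (case s e of None \<Rightarrow> {id u, id v} \<in> GE p m C \<sigma>
        | Some w \<Rightarrow> w \<in> GV p m C - id ` VH \<and> {id u, w} \<in> GE p m C \<sigma> \<and> {w, id v} \<in> GE p m C \<sigma>)"
    proof (intro ballI allI impI)
      fix e u v assume e: "e \<in> EH" and uv: "e = {u, v}"
      define w where "w = (SOME w. w \<in> W \<and> eo w = e)"
      have sw: "s e = Some w" "w \<in> W" "eo w = e" using sspec[OF e] unfolding w_def by auto
      have "{w,u} \<in> GE p m C \<sigma>" "{w,v} \<in> GE p m C \<sigma>" "w \<in> GV p m C - VH"
        using eoW[OF sw(2)] sw(3) uv by auto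
      then show "case s e of None \<Rightarrow> {id u, id v} \<in> GE p m C \<sigma>
        | Some w \<Rightarrow> w \<in> GV p m C - id ` VH \<and> {id u, w} \<in> GE p m C \<sigma> \<and> {w, id v} \<in> GE p m C \<sigma>"
        using sw(1) by (simp add: insert_commute)
    qed
    show "inj_on s {e \<in> EH. s e \<noteq> None}"
    proof (rule inj_onI)
      fix e1 e2 assume h1: "e1 \<in> {e \<in> EH. s e \<noteq> None}" and h2: "e2 \<in> {e \<in> EH. s e \<noteq> None}"
        and h3: "s e1 = s e2"
      define w1 where "w1 = (SOME w. w \<in> W \<and> eo w = e1)"
      define w2 where "w2 = (SOME w. w \<in> W \<and> eo w = e2)"
      have a1: "s e1 = Some w1" "eo w1 = e1" using sspec[of e1] h1 unfolding w1_def by auto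
      have a2: "s e2 = Some w2" "eo w2 = e2" using sspec[of e2] h2 unfolding w2_def by auto
      have "w1 = w2" using a1(1) a2(1) h3 by simp
      then show "e1 = e2" using a1(2) a2(2) by simp
    qed
  qed
  have dens: "density VH EH = 5 * real m / (2 * real m + 1)"
    unfolding density_def cardEH cardVH by simp
  show ?thesis using hs dens unfolding VH_def by blast
qed
end
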